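(* Let $\{(\mathbf{x}_i,y_i)\}_{i=1}^n\subset\mathbb{R}^p\times\mathbb{R}$, $s>0$, and let $\mathcal{K}$ be a Mercer kernel. For $\lambda>0$ consider $$\Psi(\widetilde C)=\frac1{n^2}\sum_{i,j=1}^n\omega^s_{i,j}\big(y_i-y_j+(\mathbf{x}_j-\mathbf{x}_i)^T\widetilde C\mathbf{k}_i^{1/2}\big)^2+\lambda\sum_{j=1}^p\|\widetilde{\mathbf{c}}^j\|_2,\qquad \widetilde C\in\mathbb{R}^{p\times n}.$$ Let $$\lambda_{\max}=\max_{1\le k\le p}\frac2{n^2}\Big\|\sum_{i,j=1}^n\omega^s_{i,j}(y_i-y_j)(x_i^k-x_j^k)\mathbf{k}_i^{1/2}\Big\|_2.$$ Then for all $\lambda\ge\lambda_{\max}$, the optimal solution of $\min_{\widetilde C}\Psi(\widetilde C)$ is $\widetilde C=0$ (the zero $p\times n$ matrix minimizes $\Psi$).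
   Context: $\omega^s_{i,j}=\exp(-\|\mathbf{x}_j-\mathbf{x}_i\|^2/(2s^2))$; $x_i^k$ is the $k$-th coordinate of $\mathbf{x}_i$. $K=[\mathcal{K}(\mathbf{x}_i,\mathbf{x}_j)]_{i,j=1}^n$, $K^{1/2}$ its symmetric positive semidefinite square root, $\mathbf{k}_i^{1/2}$ the $i$-th column of $K^{1/2}$; $\widetilde{\mathbf{c}}^j$ is the $j$-th row of $\widetilde C$ and $\|\cdot\|_2$ the Euclidean norm. *)

theory Defs
  imports "HOL-Analysis.Analysis"
begin

definition mercer_kernel :: "(real^'p \<Rightarrow> real^'p \<Rightarrow> real) \<Rightarrow> bool" where
  "mercer_kernel Kf \<longleftrightarrow>
     continuous_on UNIV (\<lambda>z. Kf (fst z) (snd z)) \<and>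
     (\<forall>u v. Kf u v = Kf v u) \<and>
     (\<forall>(m::nat) (z::nat \<Rightarrow> real^'p) (c::nat \<Rightarrow> real).
        (\<Sum>i<m. \<Sum>j<m. c i * c j * Kf (z i) (z j)) \<ge> 0)"

definition gweight :: "real \<Rightarrow> real^'p \<Rightarrow> real^'p \<Rightarrow> real" where
  "gweight s xi xj = exp (- (norm (xj - xi))\<^sup>2 / (2 * s\<^sup>2))"

definition gram :: "(real^'p \<Rightarrow> real^'p \<Rightarrow> real) \<Rightarrow> ('n \<Rightarrow> real^'p) \<Rightarrow> real^'n^'n" where
  "gram Kf x = (\<chi> i j. Kf (x i) (x j))"

definition psd_matrix :: "real^'n^'n \<Rightarrow> bool" where
  "psd_matrix M \<longleftrightarrow> transpose M = M \<and> (\<forall>v. v \<bullet> (M *v v) \<ge> 0)"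

definition is_psd_sqrt :: "real^'n^'n \<Rightarrow> real^'n^'n \<Rightarrow> bool" where
  "is_psd_sqrt R M \<longleftrightarrow> psd_matrix R \<and> R ** R = M"

definition col_of :: "real^'n^'m \<Rightarrow> 'n \<Rightarrow> real^'m" where
  "col_of R i = (\<chi> j. R $ j $ i)"

definition Psi :: "real \<Rightarrow> real \<Rightarrow> ('n::finite \<Rightarrow> real^'p) \<Rightarrow> ('n \<Rightarrow> real) \<Rightarrow> real^'n^'n
                    \<Rightarrow> real^'n^'p \<Rightarrow> real" where
  "Psi s lam x y R C =
     1 / (real CARD('n))\<^sup>2 * (\<Sum>i\<in>UNIV. \<Sum>j\<in>UNIV.
        gweight s (x i) (x j) * (y i - y j + (x j - x i) \<bullet> (C *v col_of R i))\<^sup>2)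
     + lam * (\<Sum>j\<in>UNIV. norm (C $ j))"

definition lambda_max :: "real \<Rightarrow> ('n::finite \<Rightarrow> real^'p::finite) \<Rightarrow> ('n \<Rightarrow> real) \<Rightarrow> real^'n^'n \<Rightarrow> real" where
  "lambda_max s x y R =
     Max (range (\<lambda>k::'p. 2 / (real CARD('n))\<^sup>2 *
        norm (\<Sum>i\<in>UNIV. \<Sum>j\<in>UNIV.
           (gweight s (x i) (x j) * (y i - y j) * (x i $ k - x j $ k)) *\<^sub>R col_of R i)))"

end

theory Submission
  imports Defs
begin

lemma mv_inner: "(C *v v) $ k = (C $ k) \<bullet> (v::real^'n)"
  by (simp add: matrix_vector_mult_def inner_vec_def mult.commute)

lemma b_expand: "(d::real^'p) \<bullet> (C *v v) = (\<Sum>k\<in>UNIV. d $ k * ((C $ k) \<bullet> (v::real^'n)))"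
  by (simp add: inner_vec_def mv_inner)

theorem theorem9:
  fixes x :: "'n::finite \<Rightarrow> real^'p::finite"
    and y :: "'n \<Rightarrow> real"
    and s lam :: real
    and Kf :: "real^'p \<Rightarrow> real^'p \<Rightarrow> real"
    and R :: "real^'n^'n"
  assumes "s > 0"
    and "mercer_kernel Kf"
    and "is_psd_sqrt R (gram Kf x)"
    and "lam > 0"
    and "lam \<ge> lambda_max s x y R"
  shows "\<forall>C :: real^'n^'p. Psi s lam x y R 0 \<le> Psi s lam x y R C"
proof
  fix C :: "real^'n^'p"
  define w where "w i j = gweight s (x i) (x j)" for i j
  define a where "a i j = y i - y j" for i j
  define b where "b i j = (x j - x i) \<bullet> (C *v col_of R i)" for i j
  define N where "N = 1 / (real CARD('n))\<^sup>2"
  define G where "G k = (\<Sum>i\<in>UNIV. \<Sum>j\<in>UNIV.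
           (w i j * a i j * (x i $ k - x j $ k)) *\<^sub>R col_of R i)" for k
  have w0: "w i j \<ge> 0" for i j by (simp add: w_def gweight_def)
  have N0: "N \<ge> 0" by (simp add: N_def)
  have P0: "Psi s lam x y R 0 = N * (\<Sum>i\<in>UNIV. \<Sum>j\<in>UNIV. w i j * (a i j)\<^sup>2)"
    by (simp add: Psi_def N_def w_def a_def)
  have PC: "Psi s lam x y R C = N * (\<Sum>i\<in>UNIV. \<Sum>j\<in>UNIV. w i j * (a i j + b i j)\<^sup>2)
             + lam * (\<Sum>k\<in>UNIV. norm (C $ k))"
    by (simp add: Psi_def N_def w_def a_def b_def)
  have sq: "w i j * (a i j + b i j)\<^sup>2 \<ge> w i j * (a i j)\<^sup>2 + 2 * (w i j * a i j * b i j)" for i j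
  proof -
    have "(a i j + b i j)\<^sup>2 \<ge> (a i j)\<^sup>2 + 2 * a i j * b i j"
      by (simp add: power2_eq_square algebra_simps)
    from mult_left_mono[OF this w0[of i j]] show ?thesis by (simp add: algebra_simps)
  qed
  have ident: "(\<Sum>i\<in>UNIV. \<Sum>j\<in>UNIV. w i j * a i j * b i j) = - (\<Sum>k\<in>UNIV. C $ k \<bullet> G k)"
  proof -
    have "(\<Sum>i\<in>UNIV. \<Sum>j\<in>UNIV. w i j * a i j * b i j)
        = (\<Sum>i\<in>UNIV. \<Sum>j\<in>UNIV. \<Sum>k\<in>UNIV. w i j * a i j * ((x j - x i) $ k * (C $ k \<bullet> col_of R i)))"
      by (simp add: b_def b_expand sum_distrib_left)
    also have "\<dots> = (\<Sum>k\<in>UNIV. \<Sum>i\<in>UNIV. \<Sum>j\<in>UNIV. w i j * a i j * ((x j - x i) $ k * (C $ k \<bullet> col_of R i)))"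
      proof -
      have "(\<Sum>i\<in>UNIV. \<Sum>j\<in>UNIV. \<Sum>k\<in>UNIV. w i j * a i j * ((x j - x i) $ k * (C $ k \<bullet> col_of R i)))
          = (\<Sum>i\<in>UNIV. \<Sum>k\<in>UNIV. \<Sum>j\<in>UNIV. w i j * a i j * ((x j - x i) $ k * (C $ k \<bullet> col_of R i)))"
        by (rule sum.cong[OF refl]) (rule sum.swap)
      also have "\<dots> = (\<Sum>k\<in>UNIV. \<Sum>i\<in>UNIV. \<Sum>j\<in>UNIV. w i j * a i j * ((x j - x i) $ k * (C $ k \<bullet> col_of R i)))"
        by (rule sum.swap)
      finally show ?thesis .
    qed
    also have "\<dots> = (\<Sum>k\<in>UNIV. - (C $ k \<bullet> G k))"
      by (simp add: G_def inner_sum_right algebra_simps sum_negf[symmetric])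
    finally show ?thesis by (simp add: sum_negf)
  qed
  have Gk: "2 * N * norm (G k) \<le> lam" for k
  proof -
    have "2 * N * norm (G k) \<le> lambda_max s x y R"
      unfolding lambda_max_def
      by (rule Max_ge) (auto simp: G_def N_def w_def a_def)
    with assms(5) show ?thesis by simp
  qed
  have lin: "- (2 * N) * (C $ k \<bullet> G k) \<ge> - lam * norm (C $ k)" for k
  proof -
    have "\<bar>C $ k \<bullet> G k\<bar> \<le> norm (C $ k) * norm (G k)" by (rule Cauchy_Schwarz_ineq2)
    hence "2 * N * \<bar>C $ k \<bullet> G k\<bar> \<le> norm (C $ k) * (2 * N * norm (G k))"
      using N0 by (smt (verit) mult.assoc mult.left_commute mult_left_mono)
    also have "\<dots> \<le> norm (C $ k) * lam" using Gk[of k] by (simp add: mult_left_mono)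
    finally have "2 * N * \<bar>C $ k \<bullet> G k\<bar> \<le> lam * norm (C $ k)" by (simp add: mult.commute)
    moreover have "2 * N * (C $ k \<bullet> G k) \<le> 2 * N * \<bar>C $ k \<bullet> G k\<bar>"
      using N0 by (simp add: mult_left_mono)
    ultimately show ?thesis by linarith
  qed
  have "(\<Sum>i\<in>UNIV. \<Sum>j\<in>UNIV. w i j * (a i j + b i j)\<^sup>2)
      \<ge> (\<Sum>i\<in>UNIV. \<Sum>j\<in>UNIV. w i j * (a i j)\<^sup>2 + 2 * (w i j * a i j * b i j))"
    by (intro sum_mono sq)
  also have "(\<Sum>i\<in>UNIV. \<Sum>j\<in>UNIV. w i j * (a i j)\<^sup>2 + 2 * (w i j * a i j * b i j))
     = (\<Sum>i\<in>UNIV. \<Sum>j\<in>UNIV. w i j * (a i j)\<^sup>2) + 2 * (\<Sum>i\<in>UNIV. \<Sum>j\<in>UNIV. w i j * a i j * b i j)"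
    by (simp add: sum.distrib sum_distrib_left)
  finally have S: "(\<Sum>i\<in>UNIV. \<Sum>j\<in>UNIV. w i j * (a i j)\<^sup>2) + 2 * (\<Sum>i\<in>UNIV. \<Sum>j\<in>UNIV. w i j * a i j * b i j) \<le> (\<Sum>i\<in>UNIV. \<Sum>j\<in>UNIV. w i j * (a i j + b i j)\<^sup>2)" .
  have H: "N * (\<Sum>i\<in>UNIV. \<Sum>j\<in>UNIV. w i j * (a i j + b i j)\<^sup>2)
      \<ge> N * (\<Sum>i\<in>UNIV. \<Sum>j\<in>UNIV. w i j * (a i j)\<^sup>2) + (\<Sum>k\<in>UNIV. - (2 * N) * (C $ k \<bullet> G k))"
  proof -
    have e: "(\<Sum>k\<in>UNIV. - (2 * N) * (C $ k \<bullet> G k)) = N * (2 * (- (\<Sum>k\<in>UNIV. C $ k \<bullet> G k)))"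
      by (simp add: sum_distrib_left sum_negf mult.assoc mult.left_commute)
    from mult_left_mono[OF S N0] show ?thesis
      unfolding e ident by (simp add: right_diff_distrib)
  qed
  have "(\<Sum>k\<in>UNIV. - (2 * N) * (C $ k \<bullet> G k)) \<ge> (\<Sum>k\<in>UNIV. - lam * norm (C $ k))"
    by (intro sum_mono lin)
  hence "(\<Sum>k\<in>UNIV. - (2 * N) * (C $ k \<bullet> G k)) + lam * (\<Sum>k\<in>UNIV. norm (C $ k)) \<ge> 0"
    by (simp add: sum_distrib_left sum_negf)
  with H show "Psi s lam x y R 0 \<le> Psi s lam x y R C" unfolding P0 PC by linarith
qed

end
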